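(* For any positive integer $k$, in $\mathfrak{h}^1_t[[u]]$, $$S_t\left(\frac{1}{1-z_ku}\right)\ast S_{1-t}\left(\frac{1}{1+z_ku}\right)=1$$ and $$S_{1-2t}\left(\frac{1}{1-z_ku}\right)\ast_t\frac{1}{1+z_ku}=1.$$
   Context: $t,u$ are commuting variables. $\mathfrak{h}_t=\mathbb{Q}[t]\langle x,y\rangle$ ($1$ = empty word), $\mathfrak{h}^1_t=\mathbb{Q}[t]+\mathfrak{h}_ty$, $z_k=x^{k-1}y$, and $\frac1{1\mp z_ku}=\sum_n(\pm1)^nz_k^nu^n$ (concatenation powers). For a parameter $s\in\mathbb{Q}[t]$, $\sigma_s$ is the algebra automorphism of $\mathfrak{h}_t$ with $\sigma_s(x)=x,\sigma_s(y)=sx+y$ and $S_s$ is the $\mathbb{Q}[t]$-linear map with $S_s(1)=1$, $S_s(wa)=\sigma_s(w)a$ for words $w$, letters $a$. For a word $w$, $\delta(w)=1$ if $w=1$, else $0$. The harmonic product $\ast$ on $\mathfrak{h}^1_t$ is the $\mathbb{Q}[t]$-bilinear product with $1\ast w=w\ast1=w$ and $z_kw_1\ast z_lw_2=z_k(w_1\ast z_lw_2)+z_l(z_kw_1\ast w_2)+z_{k+l}(w_1\ast w_2)$; the $t$-harmonic product $\ast_t$ is the $\mathbb{Q}[t]$-bilinear product with $1\ast_t w=w\ast_t1=w$ and $z_kw_1\ast_t z_lw_2=z_k(w_1\ast_t z_lw_2)+z_l(z_kw_1\ast_t w_2)+(1-2t)z_{k+l}(w_1\ast_t w_2)+[1-\delta(w_1)\delta(w_2)](t^2-t)x^{k+l}(w_1\ast_t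 w_2)$ (for words $w_1,w_2\in\mathfrak{h}^1_t$, $k,l\ge1$). Everything extends coefficientwise to power series in $u$. *)

theory Defs
  imports "HOL-Library.Poly_Mapping" "HOL-Computational_Algebra.Polynomial"
begin

datatype letter = X | Y

type_synonym word = "letter list"

text \<open>Elements of h_t: finitely supported Q[t]-linear combinations of words
  (the empty word is 1).  Coefficient ring Q[t] = rat poly.\<close>
type_synonym hpoly = "word \<Rightarrow>\<^sub>0 rat poly"

text \<open>Elements of h_t[[u]]: coefficient sequences (coefficient of u^n).\<close>
type_synonym hser = "nat \<Rightarrow> hpoly"

definition tvar :: "rat poly" where "tvar = [:0, 1:]"

definition hsmult :: "rat poly \<Rightarrow> hpoly \<Rightarrow> hpoly" where
  "hsmult c f = Poly_Mapping.map (\<lambda>a. c * a) f"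

definition bilin :: "(word \<Rightarrow> word \<Rightarrow> hpoly) \<Rightarrow> hpoly \<Rightarrow> hpoly \<Rightarrow> hpoly" where
  "bilin op f g = (\<Sum>w1\<in>Poly_Mapping.keys f. \<Sum>w2\<in>Poly_Mapping.keys g.
      hsmult (Poly_Mapping.lookup f w1 * Poly_Mapping.lookup g w2) (op w1 w2))"

definition linext :: "(word \<Rightarrow> hpoly) \<Rightarrow> hpoly \<Rightarrow> hpoly" where
  "linext \<phi> f = (\<Sum>w\<in>Poly_Mapping.keys f. hsmult (Poly_Mapping.lookup f w) (\<phi> w))"

definition wd :: "word \<Rightarrow> hpoly" where "wd w = Poly_Mapping.single w 1"

definition cat :: "hpoly \<Rightarrow> hpoly \<Rightarrow> hpoly" where
  "cat = bilin (\<lambda>w1 w2. wd (w1 @ w2))"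

definition pre :: "word \<Rightarrow> hpoly \<Rightarrow> hpoly" where
  "pre p f = cat (wd p) f"

definition z :: "nat \<Rightarrow> word" where
  "z k = replicate (k - 1) X @ [Y]"

definition sigma_letter :: "rat poly \<Rightarrow> letter \<Rightarrow> hpoly" where
  "sigma_letter s a = (case a of X \<Rightarrow> wd [X] | Y \<Rightarrow> hsmult s (wd [X]) + wd [Y])"

fun sigma_word :: "rat poly \<Rightarrow> word \<Rightarrow> hpoly" where
  "sigma_word s [] = wd []"
| "sigma_word s (a # w) = cat (sigma_letter s a) (sigma_word s w)"

definition sigma :: "rat poly \<Rightarrow> hpoly \<Rightarrow> hpoly" where
  "sigma s = linext (sigma_word s)"

definition S_word :: "rat poly \<Rightarrow> word \<Rightarrow> hpoly" where
  "S_word s w = (if w = [] then wd [] else cat (sigma_word s (butlast w)) (wd [last w]))"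

definition S :: "rat poly \<Rightarrow> hpoly \<Rightarrow> hpoly" where
  "S s = linext (S_word s)"

text \<open>A word of h^1 (ending in y, or empty) is z_{k_1}...z_{k_r}; we recover the
  index list (k_1,...,k_r), all k_i \<ge> 1.\<close>
fun dec :: "nat \<Rightarrow> word \<Rightarrow> nat list" where
  "dec i [] = []"
| "dec i (X # w) = dec (Suc i) w"
| "dec i (Y # w) = Suc i # dec 0 w"

definition enc :: "nat list \<Rightarrow> word" where
  "enc ks = concat (map z ks)"

fun harm :: "nat list \<Rightarrow> nat list \<Rightarrow> hpoly" where
  "harm [] b = wd (enc b)"
| "harm a [] = wd (enc a)"
| "harm (k # a) (l # b) =
     pre (z k) (harm a (l # b)) + pre (z l) (harm (k # a) b) + pre (z (k + l)) (harm a b)"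

fun tharm :: "nat list \<Rightarrow> nat list \<Rightarrow> hpoly" where
  "tharm [] b = wd (enc b)"
| "tharm a [] = wd (enc a)"
| "tharm (k # a) (l # b) =
     pre (z k) (tharm a (l # b)) + pre (z l) (tharm (k # a) b)
     + hsmult (1 - 2 * tvar) (pre (z (k + l)) (tharm a b))
     + hsmult (if a = [] \<and> b = [] then 0 else 1)
         (hsmult (tvar ^ 2 - tvar) (pre (replicate (k + l) X) (tharm a b)))"

definition hprod :: "hpoly \<Rightarrow> hpoly \<Rightarrow> hpoly" where
  "hprod = bilin (\<lambda>w1 w2. harm (dec 0 w1) (dec 0 w2))"

definition thprod :: "hpoly \<Rightarrow> hpoly \<Rightarrow> hpoly" where
  "thprod = bilin (\<lambda>w1 w2. tharm (dec 0 w1) (dec 0 w2))"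

definition ser_mult :: "(hpoly \<Rightarrow> hpoly \<Rightarrow> hpoly) \<Rightarrow> hser \<Rightarrow> hser \<Rightarrow> hser" where
  "ser_mult m F G = (\<lambda>n. \<Sum>i\<le>n. m (F i) (G (n - i)))"

definition ser_map :: "(hpoly \<Rightarrow> hpoly) \<Rightarrow> hser \<Rightarrow> hser" where
  "ser_map \<phi> F = (\<lambda>n. \<phi> (F n))"

definition ser_one :: hser where
  "ser_one = (\<lambda>n. if n = 0 then wd [] else 0)"

text \<open>1/(1 - c z_k u) = sum_n c^n z_k^n u^n, for c = 1 or c = -1.\<close>
definition geom :: "rat poly \<Rightarrow> nat \<Rightarrow> hser" where
  "geom c k = (\<lambda>n. hsmult (c ^ n) (wd (concat (replicate n (z k)))))"

end

theory Submission
  imports Defs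
begin


lemma lookup_hsmult[simp]: "Poly_Mapping.lookup (hsmult c f) w = c * Poly_Mapping.lookup f w"
  unfolding hsmult_def by transfer (simp add: when_def)

lemma hsmult_eqI: "(\<And>w. Poly_Mapping.lookup f w = Poly_Mapping.lookup g w) \<Longrightarrow> f = g"
  by (rule poly_mapping_eqI)

lemma hsmult_add: "hsmult c (f + g) = hsmult c f + hsmult c g"
  by (rule poly_mapping_eqI) (simp add: lookup_add algebra_simps)
lemma hsmult_add_left: "hsmult (c + d) f = hsmult c f + hsmult d f"
  by (rule poly_mapping_eqI) (simp add: lookup_add algebra_simps)
lemma hsmult_mult: "hsmult c (hsmult d f) = hsmult (c * d) f"
  by (rule poly_mapping_eqI) (simp add: algebra_simps)
lemma hsmult_one[simp]: "hsmult 1 f = f"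
  by (rule poly_mapping_eqI) simp
lemma hsmult_zero[simp]: "hsmult 0 f = 0"
  by (rule poly_mapping_eqI) simp
lemma hsmult_zero_right[simp]: "hsmult c 0 = 0"
  by (rule poly_mapping_eqI) simp
lemma hsmult_minus: "hsmult c (f - g) = hsmult c f - hsmult c g"
  by (rule poly_mapping_eqI) (simp add: lookup_minus algebra_simps)
lemma hsmult_uminus: "hsmult c (- g) = - hsmult c g"
  by (rule poly_mapping_eqI) (simp add: algebra_simps)
lemma hsmult_uminus_left: "hsmult (- c) g = - hsmult c g"
  by (rule poly_mapping_eqI) (simp add: algebra_simps)
lemma hsmult_sum: "hsmult c (sum f A) = (\<Sum>x\<in>A. hsmult c (f x))"
  by (rule poly_mapping_eqI) (simp add: lookup_sum sum_distrib_left)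
lemma hsmult_sum_left: "hsmult (sum f A) g = (\<Sum>x\<in>A. hsmult (f x) g)"
  by (rule poly_mapping_eqI) (simp add: lookup_sum sum_distrib_right)

lemma hsmult_wd: "hsmult c (wd w) = Poly_Mapping.single w c"
  by (rule poly_mapping_eqI) (simp add: wd_def lookup_single when_def)

lemma lookup_wd: "Poly_Mapping.lookup (wd w) v = (if w = v then 1 else 0)"
  by (simp add: wd_def lookup_single when_def)

lemma keys_wd[simp]: "Poly_Mapping.keys (wd w) = {w}"
  by (simp add: wd_def)

lemma expand: "f = (\<Sum>w\<in>Poly_Mapping.keys f. hsmult (Poly_Mapping.lookup f w) (wd w))"
proof (rule poly_mapping_eqI)
  fix v
  show "Poly_Mapping.lookup f v = Poly_Mapping.lookup (\<Sum>w\<in>Poly_Mapping.keys f. hsmult (Poly_Mapping.lookup f w) (wd w)) v"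
    by (simp add: lookup_sum lookup_wd if_distrib[of "(*) _"] in_keys_iff cong: if_cong)
qed

definition lin :: "(hpoly \<Rightarrow> hpoly) \<Rightarrow> bool" where
  "lin L \<longleftrightarrow> (\<forall>f g. L (f + g) = L f + L g) \<and> (\<forall>c f. L (hsmult c f) = hsmult c (L f))"

lemma linD: "lin L \<Longrightarrow> L (f + g) = L f + L g" "lin L \<Longrightarrow> L (hsmult c f) = hsmult c (L f)"
  by (auto simp: lin_def)

lemma lin_zero: "lin L \<Longrightarrow> L 0 = 0"
  by (metis hsmult_zero linD(2))

lemma lin_sum: "lin L \<Longrightarrow> L (sum f A) = (\<Sum>x\<in>A. L (f x))"
  by (induction A rule: infinite_finite_induct) (auto simp: lin_zero linD)

lemma lin_minus: "lin L \<Longrightarrow> L (f - g) = L f - L g"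
  by (metis add_diff_cancel diff_add_cancel linD(1))

lemma lin_uminus: "lin L \<Longrightarrow> L (- g) = - L g"
  by (metis diff_0 lin_minus lin_zero)

lemma lin_expand: "lin L \<Longrightarrow> L f = (\<Sum>w\<in>Poly_Mapping.keys f. hsmult (Poly_Mapping.lookup f w) (L (wd w)))"
  by (subst expand) (simp add: lin_sum linD)

lemma lin_eq: "lin L1 \<Longrightarrow> lin L2 \<Longrightarrow> (\<And>w. w \<in> Poly_Mapping.keys f \<Longrightarrow> L1 (wd w) = L2 (wd w)) \<Longrightarrow> L1 f = L2 f"
  apply (subst lin_expand[of L1], assumption)
  apply (subst lin_expand[of L2], assumption)
  by (rule sum.cong) auto

lemma lin_id: "lin (\<lambda>f. f)" by (simp add: lin_def)
lemma lin_comp: "lin L1 \<Longrightarrow> lin L2 \<Longrightarrow> lin (\<lambda>f. L1 (L2 f))" by (simp add: lin_def)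
lemma lin_hsmult: "lin (hsmult c)" by (simp add: lin_def hsmult_add hsmult_mult mult.commute)
lemma lin_add: "lin L1 \<Longrightarrow> lin L2 \<Longrightarrow> lin (\<lambda>f. L1 f + L2 f)" by (simp add: lin_def hsmult_add)
lemma lin_diff: "lin L1 \<Longrightarrow> lin L2 \<Longrightarrow> lin (\<lambda>f. L1 f - L2 f)" by (simp add: lin_def hsmult_minus)
lemma lin_const0: "lin (\<lambda>f. 0)" by (simp add: lin_def)
lemma lin_sumf: "(\<And>x. x \<in> A \<Longrightarrow> lin (L x)) \<Longrightarrow> lin (\<lambda>f. \<Sum>x\<in>A. L x f)"
  by (simp add: lin_def sum.distrib hsmult_sum)

lemma linext_superset: "finite SS \<Longrightarrow> Poly_Mapping.keys f \<subseteq> SS \<Longrightarrow>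
   linext \<phi> f = (\<Sum>w\<in>SS. hsmult (Poly_Mapping.lookup f w) (\<phi> w))"
  unfolding linext_def by (rule sum.mono_neutral_left) (auto simp: in_keys_iff)

lemma lin_linext: "lin (linext \<phi>)"
proof -
  have "linext \<phi> (f + g) = linext \<phi> f + linext \<phi> g" for f g
  proof -
    let ?S = "Poly_Mapping.keys f \<union> Poly_Mapping.keys g"
    have "linext \<phi> (f + g) = (\<Sum>w\<in>?S. hsmult (Poly_Mapping.lookup (f+g) w) (\<phi> w))"
      by (rule linext_superset) (auto dest: set_mp[OF keys_add])
    also have "\<dots> = (\<Sum>w\<in>?S. hsmult (Poly_Mapping.lookup f w) (\<phi> w)) + (\<Sum>w\<in>?S. hsmult (Poly_Mapping.lookup g w) (\<phi> w))"
      by (simp add: lookup_add hsmult_add_left sum.distrib)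
    also have "\<dots> = linext \<phi> f + linext \<phi> g"
      using linext_superset[of ?S f \<phi>] linext_superset[of ?S g \<phi>] by simp
    finally show ?thesis .
  qed
  moreover have "linext \<phi> (hsmult c f) = hsmult c (linext \<phi> f)" for c f
  proof -
    have "linext \<phi> (hsmult c f) = (\<Sum>w\<in>Poly_Mapping.keys f. hsmult (Poly_Mapping.lookup (hsmult c f) w) (\<phi> w))"
      by (rule linext_superset) (auto simp: in_keys_iff)
    then show ?thesis by (simp add: linext_def hsmult_sum hsmult_mult)
  qed
  ultimately show ?thesis by (simp add: lin_def)
qed

lemma linext_wd[simp]: "linext \<phi> (wd w) = \<phi> w"
  by (simp add: linext_def lookup_wd)

lemma bilin_alt: "bilin op f g = linext (\<lambda>w1. linext (\<lambda>w2. op w1 w2) g) f"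
  by (simp add: bilin_def linext_def hsmult_sum hsmult_mult)

lemma lin_bilin1: "lin (\<lambda>f. bilin op f g)"
  by (simp add: bilin_alt lin_linext)

lemma bilin_alt2: "bilin op f g = (\<Sum>w1\<in>Poly_Mapping.keys f. hsmult (Poly_Mapping.lookup f w1) (linext (op w1) g))"
  by (simp add: bilin_alt linext_def[of "\<lambda>w1. linext (op w1) g"])

lemma lin_bilin2: "lin (\<lambda>g. bilin op f g)"
  unfolding bilin_alt2
  by (intro lin_sumf lin_comp[OF lin_hsmult] lin_linext)

lemma bilin_wd[simp]: "bilin op (wd w1) (wd w2) = op w1 w2"
  by (simp add: bilin_alt)



lemma lin_cat1: "lin (\<lambda>f. cat f g)" unfolding cat_def by (rule lin_bilin1)
lemma lin_cat2: "lin (cat f)" unfolding cat_def by (rule lin_bilin2)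
lemma cat_wd[simp]: "cat (wd a) (wd b) = wd (a @ b)" by (simp add: cat_def)
lemma lin_pre: "lin (pre p)" unfolding pre_def by (rule lin_cat2)
lemma pre_wd[simp]: "pre p (wd w) = wd (p @ w)" by (simp add: pre_def)

lemma cat_assoc: "cat (cat f g) h = cat f (cat g h)"
proof -
  have "cat (cat (wd a) g) h = cat (wd a) (cat g h)" for a
  proof -
    have "cat (cat (wd a) (wd b)) h = cat (wd a) (cat (wd b) h)" for b
      by (rule lin_eq[where f=h, OF lin_comp[OF lin_cat2 lin_id] lin_comp[OF lin_cat2 lin_cat2]]) simp
    then show ?thesis
      by (intro lin_eq[where f=g, OF lin_comp[OF lin_cat1[of h] lin_cat2] lin_comp[OF lin_cat2 lin_cat1]]) simp
  qed
  then show ?thesis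
    by (intro lin_eq[where f=f, OF lin_comp[OF lin_cat1[of h] lin_cat1] lin_cat1]) simp
qed

lemma cat_nil_left[simp]: "cat (wd []) f = f"
  by (rule lin_eq[OF lin_cat2 lin_id]) simp
lemma cat_nil_right[simp]: "cat f (wd []) = f"
  by (rule lin_eq[OF lin_cat1 lin_id]) simp

lemma pre_pre: "pre p (pre q f) = pre (p @ q) f"
  by (simp add: pre_def cat_assoc[symmetric])

lemma pre_nil[simp]: "pre [] f = f" by (simp add: pre_def)

lemma pre_add: "pre p (f + g) = pre p f + pre p g" by (rule linD[OF lin_pre])
lemma pre_hsmult: "pre p (hsmult c f) = hsmult c (pre p f)" by (rule linD[OF lin_pre])
lemma pre_zero[simp]: "pre p 0 = 0" by (rule lin_zero[OF lin_pre])
lemma pre_sum: "pre p (sum f A) = (\<Sum>x\<in>A. pre p (f x))" by (rule lin_sum[OF lin_pre])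
lemma pre_minus: "pre p (f - g) = pre p f - pre p g" by (rule lin_minus[OF lin_pre])

lemma cat_add_left: "cat (f + g) h = cat f h + cat g h" by (rule linD[OF lin_cat1])
lemma cat_hsmult_left: "cat (hsmult c f) h = hsmult c (cat f h)" by (rule linD[OF lin_cat1])

section \<open>sigma and S\<close>

lemma sigma_word_append: "sigma_word s (u @ v) = cat (sigma_word s u) (sigma_word s v)"
  by (induction u) (auto simp: cat_assoc)

lemma sigma_word_X: "sigma_word s (replicate m X) = wd (replicate m X)"
  by (induction m) (auto simp: sigma_letter_def)

lemma z_def2: "1 \<le> k \<Longrightarrow> z k = replicate (k - 1) X @ [Y]" by (simp add: z_def)

lemma sigma_z: "1 \<le> k \<Longrightarrow> sigma_word s (z k) = hsmult s (wd (replicate k X)) + wd (z k)"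
proof -
  assume k: "1 \<le> k"
  have "sigma_word s (z k) = cat (wd (replicate (k-1) X)) (hsmult s (wd [X]) + wd [Y])"
    by (simp add: z_def sigma_word_append sigma_word_X sigma_letter_def)
  also have "\<dots> = hsmult s (wd (replicate (k - 1) X @ [X])) + wd (z k)"
    using linD[OF lin_cat2, of "wd (replicate (k-1) X)"] by (simp add: z_def)
  also have "replicate (k - 1) X @ [X] = replicate k X"
    using k by (metis Suc_diff_le diff_Suc_1 replicate_Suc replicate_append_same)
  finally show ?thesis .
qed

definition zpow :: "nat \<Rightarrow> nat \<Rightarrow> word" where "zpow k n = concat (replicate n (z k))"

lemma zpow_Suc: "zpow k (Suc n) = z k @ zpow k n" by (simp add: zpow_def)
lemma zpow_Suc2: "zpow k (Suc n) = zpow k n @ z k"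
  by (induction n) (simp_all add: zpow_def)

lemma S_word_Suc: "1 \<le> k \<Longrightarrow> S_word s (zpow k (Suc n)) = cat (sigma_word s (zpow k n)) (wd (z k))"
proof -
  assume k: "1 \<le> k"
  have e: "zpow k (Suc n) = (zpow k n @ replicate (k - 1) X) @ [Y]"
    by (simp add: zpow_Suc2 z_def)
  have b: "butlast (zpow k (Suc n)) = zpow k n @ replicate (k - 1) X" and l: "last (zpow k (Suc n)) = Y"
    by (simp only: e butlast_snoc last_snoc)+
  have ne: "zpow k (Suc n) \<noteq> []" using e by simp
  show ?thesis
    unfolding S_word_def b l using ne
    by (simp add: sigma_word_append sigma_word_X cat_assoc z_def)
qed

lemma S_word_SS: "1 \<le> k \<Longrightarrow> S_word s (zpow k (Suc (Suc n))) =
   hsmult s (pre (replicate k X) (S_word s (zpow k (Suc n)))) + pre (z k) (S_word s (zpow k (Suc n)))"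
proof -
  assume k: "1 \<le> k"
  have "S_word s (zpow k (Suc (Suc n))) = cat (cat (sigma_word s (z k)) (sigma_word s (zpow k n))) (wd (z k))"
    using k by (simp only: S_word_Suc[OF k]) (simp add: zpow_Suc sigma_word_append)
  also have "\<dots> = cat (sigma_word s (z k)) (S_word s (zpow k (Suc n)))"
    using k by (simp add: S_word_Suc cat_assoc)
  also have "\<dots> = hsmult s (pre (replicate k X) (S_word s (zpow k (Suc n)))) + pre (z k) (S_word s (zpow k (Suc n)))"
    using k by (simp add: sigma_z cat_add_left cat_hsmult_left pre_def)
  finally show ?thesis .
qed

lemma S_word_0: "S_word s (zpow k 0) = wd []" by (simp add: S_word_def zpow_def)
lemma S_word_1: "1 \<le> k \<Longrightarrow> S_word s (zpow k 1) = wd (z k)"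
  using S_word_Suc[of k s 0] by (simp add: zpow_def)

lemma dec_rep: "dec i (replicate m X @ Y # w) = Suc (i + m) # dec 0 w"
  by (induction m arbitrary: i) auto

lemma dec_z: "1 \<le> a \<Longrightarrow> dec 0 (z a @ w) = a # dec 0 w"
  by (simp add: z_def dec_rep)

lemma dec_z0: "1 \<le> a \<Longrightarrow> dec 0 (z a) = [a]"
  using dec_z[of a "[]"] by simp

lemma enc_Cons[simp]: "enc (a # ks) = z a @ enc ks" by (simp add: enc_def)
lemma enc_Nil[simp]: "enc [] = []" by (simp add: enc_def)

definition h1w :: "word \<Rightarrow> bool" where "h1w w \<longleftrightarrow> enc (dec 0 w) = w"

lemma h1w_nil[simp]: "h1w []" by (simp add: h1w_def)
lemma h1w_z: "1 \<le> a \<Longrightarrow> h1w w \<Longrightarrow> h1w (z a @ w)"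
  by (simp add: h1w_def dec_z)
lemma h1w_dec_nil: "h1w w \<Longrightarrow> dec 0 w = [] \<longleftrightarrow> w = []"
  by (auto simp: h1w_def)

definition h1 :: "hpoly \<Rightarrow> bool" where "h1 f \<longleftrightarrow> (\<forall>w\<in>Poly_Mapping.keys f. h1w w)"

lemma keys_hsmult: "Poly_Mapping.keys (hsmult c f) \<subseteq> Poly_Mapping.keys f"
  by (auto simp: in_keys_iff)

lemma h1_add: "h1 f \<Longrightarrow> h1 g \<Longrightarrow> h1 (f + g)"
  unfolding h1_def by (auto dest: set_mp[OF keys_add])
lemma h1_hsmult: "h1 f \<Longrightarrow> h1 (hsmult c f)"
  unfolding h1_def by (auto dest: set_mp[OF keys_hsmult])
lemma h1_zero[simp]: "h1 0" by (simp add: h1_def)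
lemma h1_uminus: "h1 f \<Longrightarrow> h1 (- f)"
  unfolding h1_def by (simp add: in_keys_iff)
lemma h1_minus: "h1 f \<Longrightarrow> h1 g \<Longrightarrow> h1 (f - g)"
  by (simp only: diff_conv_add_uminus) (intro h1_add h1_uminus)
lemma h1_sum: "(\<And>x. x \<in> A \<Longrightarrow> h1 (f x)) \<Longrightarrow> h1 (sum f A)"
  by (induction A rule: infinite_finite_induct) (auto intro: h1_add)
lemma h1_wd: "h1w w \<Longrightarrow> h1 (wd w)" by (simp add: h1_def)

lemma pre_expand: "pre p f = (\<Sum>w\<in>Poly_Mapping.keys f. hsmult (Poly_Mapping.lookup f w) (wd (p @ w)))"
  by (subst lin_expand[OF lin_pre]) simp

lemma h1_pre: "1 \<le> a \<Longrightarrow> h1 f \<Longrightarrow> h1 (pre (z a) f)"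
  unfolding pre_expand
  by (rule h1_sum, rule h1_hsmult, rule h1_wd) (auto simp: h1_def h1w_z)

lemma lookup_pre_nil: "p \<noteq> [] \<Longrightarrow> Poly_Mapping.lookup (pre p f) [] = 0"
  unfolding pre_expand by (simp add: lookup_sum lookup_wd)

section \<open>harmonic product at word level\<close>

lemma lin_hprod1: "lin (\<lambda>f. hprod f g)" unfolding hprod_def by (rule lin_bilin1)
lemma lin_hprod2: "lin (hprod f)" unfolding hprod_def by (rule lin_bilin2)
lemma hprod_wd: "hprod (wd w1) (wd w2) = harm (dec 0 w1) (dec 0 w2)" by (simp add: hprod_def)
lemma lin_thprod1: "lin (\<lambda>f. thprod f g)" unfolding thprod_def by (rule lin_bilin1)
lemma lin_thprod2: "lin (thprod f)" unfolding thprod_def by (rule lin_bilin2)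
lemma thprod_wd: "thprod (wd w1) (wd w2) = tharm (dec 0 w1) (dec 0 w2)" by (simp add: thprod_def)

lemma harm_nil2: "harm d [] = wd (enc d)" by (cases d) auto
lemma tharm_nil2: "tharm d [] = wd (enc d)" by (cases d) auto

lemma hprod_one_right: "h1 f \<Longrightarrow> hprod f (wd []) = f"
  by (rule lin_eq[OF lin_hprod1 lin_id]) (auto simp: hprod_wd harm_nil2 h1_def h1w_def)
lemma hprod_one_left: "h1 f \<Longrightarrow> hprod (wd []) f = f"
  by (rule lin_eq[OF lin_hprod2 lin_id]) (auto simp: hprod_wd h1_def h1w_def)
lemma thprod_one_right: "h1 f \<Longrightarrow> thprod f (wd []) = f"
  by (rule lin_eq[OF lin_thprod1 lin_id]) (auto simp: thprod_wd tharm_nil2 h1_def h1w_def)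
lemma thprod_one_left: "h1 f \<Longrightarrow> thprod (wd []) f = f"
  by (rule lin_eq[OF lin_thprod2 lin_id]) (auto simp: thprod_wd h1_def h1w_def)

lemma hprod_rec_wd:
  assumes "1 \<le> a" "1 \<le> b"
  shows "hprod (pre (z a) (wd w1)) (pre (z b) (wd w2)) =
    pre (z a) (hprod (wd w1) (pre (z b) (wd w2))) + pre (z b) (hprod (pre (z a) (wd w1)) (wd w2))
    + pre (z (a + b)) (hprod (wd w1) (wd w2))"
  using assms by (simp add: hprod_wd dec_z)

lemma hprod_rec:
  assumes "1 \<le> a" "1 \<le> b"
  shows "hprod (pre (z a) f) (pre (z b) g) =
    pre (z a) (hprod f (pre (z b) g)) + pre (z b) (hprod (pre (z a) f) g)
    + pre (z (a + b)) (hprod f g)"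
proof -
  have "hprod (pre (z a) (wd w1)) (pre (z b) g) =
    pre (z a) (hprod (wd w1) (pre (z b) g)) + pre (z b) (hprod (pre (z a) (wd w1)) g)
    + pre (z (a + b)) (hprod (wd w1) g)" for w1
    by (rule lin_eq[where f=g, OF lin_comp[OF lin_hprod2 lin_pre]
          lin_add[OF lin_add[OF lin_comp[OF lin_pre lin_comp[OF lin_hprod2 lin_pre]] lin_comp[OF lin_pre lin_hprod2]]
             lin_comp[OF lin_pre lin_hprod2]]])
      (use assms in \<open>rule hprod_rec_wd\<close>)
  then show ?thesis
    by (rule lin_eq[where f=f, OF lin_comp[OF lin_hprod1 lin_pre]
          lin_add[OF lin_add[OF lin_comp[OF lin_pre lin_hprod1] lin_comp[OF lin_pre lin_comp[OF lin_hprod1 lin_pre]]]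
             lin_comp[OF lin_pre lin_hprod1]]])
qed

definition Q :: "hpoly \<Rightarrow> hpoly \<Rightarrow> hpoly" where
  "Q f g = thprod f g - hsmult (Poly_Mapping.lookup f [] * Poly_Mapping.lookup g []) (wd [])"

lemma lin_lookup_nil1: "lin (\<lambda>f. hsmult (Poly_Mapping.lookup f [] * d) x)"
  by (simp add: lin_def lookup_add algebra_simps hsmult_add_left hsmult_mult)
lemma lin_lookup_nil2: "lin (\<lambda>f. hsmult (d * Poly_Mapping.lookup f []) x)"
  by (simp add: lin_def lookup_add algebra_simps hsmult_add_left hsmult_mult)

lemma lin_Q1: "lin (\<lambda>f. Q f g)" unfolding Q_def by (rule lin_diff[OF lin_thprod1 lin_lookup_nil1])
lemma lin_Q2: "lin (Q f)" unfolding Q_def by (rule lin_diff[OF lin_thprod2 lin_lookup_nil2])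

lemma thprod_rec_wd:
  assumes "1 \<le> a" "1 \<le> b" "h1w w1" "h1w w2"
  shows "thprod (pre (z a) (wd w1)) (pre (z b) (wd w2)) =
    pre (z a) (thprod (wd w1) (pre (z b) (wd w2))) + pre (z b) (thprod (pre (z a) (wd w1)) (wd w2))
    + hsmult (1 - 2 * tvar) (pre (z (a + b)) (thprod (wd w1) (wd w2)))
    + hsmult (tvar ^ 2 - tvar) (pre (replicate (a + b) X) (Q (wd w1) (wd w2)))"
proof (cases "w1 = [] \<and> w2 = []")
  case True
  then have "w1 = []" "w2 = []" by auto
  then show ?thesis using assms by (simp add: thprod_wd dec_z dec_z0 tharm_nil2 Q_def lookup_wd)
next
  case False
  then have "\<not> (dec 0 w1 = [] \<and> dec 0 w2 = [])" using assms h1w_dec_nil by blast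
  moreover have "Q (wd w1) (wd w2) = thprod (wd w1) (wd w2)" using False by (auto simp: Q_def lookup_wd)
  ultimately show ?thesis using assms by (simp add: thprod_wd dec_z) blast
qed

lemma thprod_rec:
  assumes "1 \<le> a" "1 \<le> b" "h1 f" "h1 g"
  shows "thprod (pre (z a) f) (pre (z b) g) =
    pre (z a) (thprod f (pre (z b) g)) + pre (z b) (thprod (pre (z a) f) g)
    + hsmult (1 - 2 * tvar) (pre (z (a + b)) (thprod f g))
    + hsmult (tvar ^ 2 - tvar) (pre (replicate (a + b) X) (Q f g))"
proof -
  have "thprod (pre (z a) (wd w1)) (pre (z b) g) =
    pre (z a) (thprod (wd w1) (pre (z b) g)) + pre (z b) (thprod (pre (z a) (wd w1)) g)
    + hsmult (1 - 2 * tvar) (pre (z (a + b)) (thprod (wd w1) g))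
    + hsmult (tvar ^ 2 - tvar) (pre (replicate (a + b) X) (Q (wd w1) g))" if w1: "h1w w1" for w1
    by (rule lin_eq[where f=g, OF lin_comp[OF lin_thprod2 lin_pre]
          lin_add[OF lin_add[OF lin_add[OF lin_comp[OF lin_pre lin_comp[OF lin_thprod2 lin_pre]] lin_comp[OF lin_pre lin_thprod2]]
             lin_comp[OF lin_hsmult lin_comp[OF lin_pre lin_thprod2]]] lin_comp[OF lin_hsmult lin_comp[OF lin_pre lin_Q2]]]])
      (intro thprod_rec_wd; use assms w1 in \<open>auto simp: h1_def\<close>)
  then show ?thesis
    by (intro lin_eq[where f=f, OF lin_comp[OF lin_thprod1 lin_pre]
          lin_add[OF lin_add[OF lin_add[OF lin_comp[OF lin_pre lin_thprod1] lin_comp[OF lin_pre lin_comp[OF lin_thprod1 lin_pre]]]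
             lin_comp[OF lin_hsmult lin_comp[OF lin_pre lin_thprod1]]] lin_comp[OF lin_hsmult lin_comp[OF lin_pre lin_Q1]]]])
      (use assms in \<open>auto simp: h1_def\<close>)
qed



lemma R1: fixes n :: nat shows "(\<Sum>i\<le>n. \<Sum>a\<in>{1..i}. h a (i - a) (n - i)) = (\<Sum>a\<in>{1..n}. \<Sum>r\<le>n - a. h a r (n - a - r))"
  (is "?L = ?R")
proof -
  have "?L = (\<Sum>(i, a)\<in>Sigma {..n} (\<lambda>i. {1..i}). h a (i - a) (n - i))"
    by (rule sum.Sigma) auto
  also have "\<dots> = (\<Sum>(a, r)\<in>Sigma {1..n} (\<lambda>a. {..n - a}). h a r (n - a - r))"
    by (rule sum.reindex_bij_witness[where i="\<lambda>(a, r). (a + r, a)" and j="\<lambda>(i, a). (a, i - a)"])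
       (auto simp: diff_diff_add)
  also have "\<dots> = ?R"
    by (rule sum.Sigma[symmetric]) auto
  finally show ?thesis .
qed

lemma R2: fixes n :: nat shows "(\<Sum>i\<le>n. \<Sum>b\<in>{1..n - i}. g i b) = (\<Sum>b\<in>{1..n}. \<Sum>i\<le>n - b. g i b)"
  (is "?L = ?R")
proof -
  have "?L = (\<Sum>(i, b)\<in>Sigma {..n} (\<lambda>i. {1..n - i}). g i b)"
    by (rule sum.Sigma) auto
  also have "\<dots> = (\<Sum>(b, i)\<in>Sigma {1..n} (\<lambda>b. {..n - b}). g i b)"
    by (rule sum.reindex_bij_witness[where i="\<lambda>(b, i). (i, b)" and j="\<lambda>(i, b). (b, i)"]) auto
  also have "\<dots> = ?R"
    by (rule sum.Sigma[symmetric]) auto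
  finally show ?thesis .
qed

lemma R3: fixes n :: nat shows "(\<Sum>i\<le>n. \<Sum>a\<in>{1..i}. \<Sum>b\<in>{1..n - i}. \<phi> a b (i - a) (n - i - b))
   = (\<Sum>c\<in>{1..n}. \<Sum>a\<in>{1..c - 1}. \<Sum>r\<le>n - c. \<phi> a (c - a) r (n - c - r))"
  (is "?L = ?R")
proof -
  have "?L = (\<Sum>i\<le>n. \<Sum>(a, b)\<in>Sigma {1..i} (\<lambda>_. {1..n - i}). \<phi> a b (i - a) (n - i - b))"
    by (rule sum.cong[OF refl], rule sum.Sigma) auto
  also have "\<dots> = (\<Sum>(i, ab)\<in>Sigma {..n} (\<lambda>i. Sigma {1..i} (\<lambda>_. {1..n - i})). (\<lambda>(a, b). \<phi> a b (i - a) (n - i - b)) ab)"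
    by (rule sum.Sigma) auto
  also have "\<dots> = (\<Sum>(c, ar)\<in>Sigma {1..n} (\<lambda>c. Sigma {1..c - 1} (\<lambda>_. {..n - c})). (\<lambda>(a, r). \<phi> a (c - a) r (n - c - r)) ar)"
    by (rule sum.reindex_bij_witness[where i="\<lambda>(c, (a, r)). (a + r, (a, c - a))" and j="\<lambda>(i, (a, b)). (a + b, (a, i - a))"])
       (auto simp: diff_diff_add add.commute)
  also have "\<dots> = (\<Sum>c\<in>{1..n}. \<Sum>(a, r)\<in>Sigma {1..c - 1} (\<lambda>_. {..n - c}). \<phi> a (c - a) r (n - c - r))"
    by (rule sum.Sigma[symmetric]) auto
  also have "\<dots> = ?R"
    by (rule sum.cong[OF refl], rule sum.Sigma[symmetric]) auto
  finally show ?thesis .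
qed



definition lpre :: "(nat \<Rightarrow> rat poly) \<Rightarrow> nat \<Rightarrow> hser \<Rightarrow> hser" where
  "lpre lam k F = (\<lambda>n. \<Sum>c\<in>{1..n}. hsmult (lam c) (pre (z (c * k)) (F (n - c))))"

lemma one_le_mult: "1 \<le> (a::nat) \<Longrightarrow> 1 \<le> k \<Longrightarrow> 1 \<le> a * k"
  by simp

lemma ser_key:
  fixes P :: "hpoly \<Rightarrow> hpoly \<Rightarrow> hpoly" and E :: "nat \<Rightarrow> nat \<Rightarrow> hpoly \<Rightarrow> hpoly \<Rightarrow> hpoly"
  assumes lin1: "\<And>g. lin (\<lambda>f. P f g)" and lin2: "\<And>f. lin (P f)"
    and rec: "\<And>a b f g. 1 \<le> a \<Longrightarrow> 1 \<le> b \<Longrightarrow> h1 f \<Longrightarrow> h1 g \<Longrightarrow>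
       P (pre (z a) f) (pre (z b) g) = pre (z a) (P f (pre (z b) g)) + pre (z b) (P (pre (z a) f) g) + E a b f g"
    and hF: "\<And>n. h1 (F n)" and hG: "\<And>n. h1 (G n)" and k: "1 \<le> k"
  shows "ser_mult P (lpre lam k F) (lpre mu k G) n =
     lpre lam k (ser_mult P F (lpre mu k G)) n + lpre mu k (ser_mult P (lpre lam k F) G) n
     + (\<Sum>i\<le>n. \<Sum>a\<in>{1..i}. \<Sum>b\<in>{1..n - i}. hsmult (lam a * mu b) (E (a * k) (b * k) (F (i - a)) (G (n - i - b))))"
proof -
  have s1: "P (sum f A) g = (\<Sum>x\<in>A. P (f x) g)" for f A g
    using lin_sum[OF lin1[of g]] by simp
  have s2: "P f (sum g A) = (\<Sum>x\<in>A. P f (g x))" for f A g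
    using lin_sum[OF lin2[of f]] by simp
  have m1: "P (hsmult c f) g = hsmult c (P f g)" for c f g
    using linD(2)[OF lin1[of g]] by simp
  have m2: "P f (hsmult c g) = hsmult c (P f g)" for c f g
    using linD(2)[OF lin2[of f]] by simp
  have "ser_mult P (lpre lam k F) (lpre mu k G) n =
     (\<Sum>i\<le>n. \<Sum>a\<in>{1..i}. \<Sum>b\<in>{1..n - i}. hsmult (lam a * mu b)
        (P (pre (z (a * k)) (F (i - a))) (pre (z (b * k)) (G (n - i - b)))))"
    unfolding ser_mult_def lpre_def
    apply (simp add: s1 s2 m1 m2 hsmult_sum hsmult_mult)
    apply (rule sum.cong[OF refl])
    apply (subst sum.swap)
    by (simp add: mult.commute)
  also have "\<dots> = (\<Sum>i\<le>n. \<Sum>a\<in>{1..i}. \<Sum>b\<in>{1..n - i}.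
       hsmult (lam a * mu b) (pre (z (a * k)) (P (F (i - a)) (pre (z (b * k)) (G (n - i - b)))))
     + hsmult (lam a * mu b) (pre (z (b * k)) (P (pre (z (a * k)) (F (i - a))) (G (n - i - b))))
     + hsmult (lam a * mu b) (E (a * k) (b * k) (F (i - a)) (G (n - i - b))))"
    apply (intro sum.cong refl)
    subgoal for i a b
      using rec[of "a * k" "b * k" "F (i - a)" "G (n - i - b)"] k hF hG
      by (simp add: hsmult_add)
    done
  also have "\<dots> = (\<Sum>i\<le>n. \<Sum>a\<in>{1..i}. \<Sum>b\<in>{1..n - i}.
       hsmult (lam a * mu b) (pre (z (a * k)) (P (F (i - a)) (pre (z (b * k)) (G (n - i - b))))))
     + (\<Sum>i\<le>n. \<Sum>a\<in>{1..i}. \<Sum>b\<in>{1..n - i}.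
       hsmult (lam a * mu b) (pre (z (b * k)) (P (pre (z (a * k)) (F (i - a))) (G (n - i - b)))))
     + (\<Sum>i\<le>n. \<Sum>a\<in>{1..i}. \<Sum>b\<in>{1..n - i}.
       hsmult (lam a * mu b) (E (a * k) (b * k) (F (i - a)) (G (n - i - b))))"
    by (simp add: sum.distrib)
  also have "(\<Sum>i\<le>n. \<Sum>a\<in>{1..i}. \<Sum>b\<in>{1..n - i}.
       hsmult (lam a * mu b) (pre (z (a * k)) (P (F (i - a)) (pre (z (b * k)) (G (n - i - b))))))
     = lpre lam k (ser_mult P F (lpre mu k G)) n"
  proof -
    have "lpre lam k (ser_mult P F (lpre mu k G)) n = (\<Sum>a\<in>{1..n}. \<Sum>r\<le>n - a. \<Sum>b\<in>{1..n - a - r}.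
       hsmult (lam a * mu b) (pre (z (a * k)) (P (F r) (pre (z (b * k)) (G (n - a - r - b))))))"
      unfolding ser_mult_def lpre_def
      by (simp add: s1 s2 m1 m2 hsmult_sum hsmult_mult pre_sum pre_hsmult)
    also have "\<dots> = (\<Sum>i\<le>n. \<Sum>a\<in>{1..i}. \<Sum>b\<in>{1..n - i}.
       hsmult (lam a * mu b) (pre (z (a * k)) (P (F (i - a)) (pre (z (b * k)) (G (n - i - b))))))"
      using R1[of "\<lambda>a r m. \<Sum>b\<in>{1..m}. hsmult (lam a * mu b) (pre (z (a * k)) (P (F r) (pre (z (b * k)) (G (m - b)))))" n]
      by simp
    finally show ?thesis by simp
  qed
  also have "(\<Sum>i\<le>n. \<Sum>a\<in>{1..i}. \<Sum>b\<in>{1..n - i}.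
       hsmult (lam a * mu b) (pre (z (b * k)) (P (pre (z (a * k)) (F (i - a))) (G (n - i - b)))))
     = lpre mu k (ser_mult P (lpre lam k F) G) n"
  proof -
    have "lpre mu k (ser_mult P (lpre lam k F) G) n = (\<Sum>b\<in>{1..n}. \<Sum>i\<le>n - b. \<Sum>a\<in>{1..i}.
       hsmult (lam a * mu b) (pre (z (b * k)) (P (pre (z (a * k)) (F (i - a))) (G (n - i - b)))))"
      unfolding ser_mult_def lpre_def
      apply (simp add: s1 s2 m1 m2 hsmult_sum hsmult_mult pre_sum pre_hsmult)
      apply (intro sum.cong refl)
      by (simp add: mult.commute add.commute)
    also have "\<dots> = (\<Sum>i\<le>n. \<Sum>b\<in>{1..n - i}. \<Sum>a\<in>{1..i}.
       hsmult (lam a * mu b) (pre (z (b * k)) (P (pre (z (a * k)) (F (i - a))) (G (n - i - b)))))"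
      by (rule R2[symmetric])
    also have "\<dots> = (\<Sum>i\<le>n. \<Sum>a\<in>{1..i}. \<Sum>b\<in>{1..n - i}.
       hsmult (lam a * mu b) (pre (z (b * k)) (P (pre (z (a * k)) (F (i - a))) (G (n - i - b)))))"
      by (rule sum.cong[OF refl], rule sum.swap)
    finally show ?thesis by simp
  qed
  finally show ?thesis .
qed



lemma ser_mult_add1:
  assumes "\<And>g. lin (\<lambda>f. P f g)"
  shows "ser_mult P (\<lambda>i. F1 i + F2 i) G n = ser_mult P F1 G n + ser_mult P F2 G n"
  unfolding ser_mult_def using linD(1)[OF assms] by (simp add: sum.distrib)
lemma ser_mult_add2:
  assumes "\<And>f. lin (P f)"
  shows "ser_mult P F (\<lambda>i. G1 i + G2 i) n = ser_mult P F G1 n + ser_mult P F G2 n"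
  unfolding ser_mult_def using linD(1)[OF assms] by (simp add: sum.distrib)
lemma ser_mult_diff1:
  assumes "\<And>g. lin (\<lambda>f. P f g)"
  shows "ser_mult P (\<lambda>i. F1 i - F2 i) G n = ser_mult P F1 G n - ser_mult P F2 G n"
  unfolding ser_mult_def using lin_minus[OF assms] by (simp add: sum_subtractf)
lemma ser_mult_diff2:
  assumes "\<And>f. lin (P f)"
  shows "ser_mult P F (\<lambda>i. G1 i - G2 i) n = ser_mult P F G1 n - ser_mult P F G2 n"
  unfolding ser_mult_def using lin_minus[OF assms] by (simp add: sum_subtractf)

lemma ser_mult_one1:
  assumes "\<And>g. lin (\<lambda>f. P f g)" "P (wd []) (G n) = G n"
  shows "ser_mult P ser_one G n = G n"
proof -
  have "ser_mult P ser_one G n = (\<Sum>i\<le>n. if i = 0 then G n else 0)"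
    unfolding ser_mult_def ser_one_def
    by (rule sum.cong) (use assms lin_zero[OF assms(1)] in auto)
  then show ?thesis by simp
qed

lemma ser_mult_one2:
  assumes "\<And>f. lin (P f)" "P (F n) (wd []) = F n"
  shows "ser_mult P F ser_one n = F n"
proof -
  have "ser_mult P F ser_one n = (\<Sum>i\<le>n. if i = n then F n else 0)"
    unfolding ser_mult_def ser_one_def
    by (rule sum.cong) (use assms lin_zero[OF assms(1)] in auto)
  then show ?thesis by simp
qed

lemma lpre_diff: "lpre lam k (\<lambda>m. F1 m - F2 m) n = lpre lam k F1 n - lpre lam k F2 n"
  by (simp add: lpre_def pre_minus hsmult_minus sum_subtractf)

lemma lpre_add_coef: "lpre lam k F n + lpre mu k F n = lpre (\<lambda>c. lam c + mu c) k F n"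
  by (simp add: lpre_def hsmult_add_left sum.distrib)

lemma lpre_zero_coef: "(\<And>c. 1 \<le> c \<Longrightarrow> lam c = 0) \<Longrightarrow> lpre lam k F n = 0"
  by (simp add: lpre_def)

lemma h1_ser_one: "h1 (ser_one n)" by (simp add: ser_one_def h1_wd)

lemma h1_lpre: "1 \<le> k \<Longrightarrow> (\<And>m. m < n \<Longrightarrow> h1 (F m)) \<Longrightarrow> h1 (lpre lam k F n)"
  unfolding lpre_def by (intro h1_sum h1_hsmult h1_pre) auto

lemma h1_from_eq:
  assumes eq: "\<And>n. F n = ser_one n + lpre lam k F n" and k: "1 \<le> k"
  shows "h1 (F n)"
proof (induction n rule: less_induct)
  case (less n)
  show ?case by (subst eq) (intro h1_add h1_ser_one h1_lpre k less)
qed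

lemma ser_main:
  fixes P :: "hpoly \<Rightarrow> hpoly \<Rightarrow> hpoly" and E :: "nat \<Rightarrow> nat \<Rightarrow> hpoly \<Rightarrow> hpoly \<Rightarrow> hpoly"
  assumes lin1: "\<And>g. lin (\<lambda>f. P f g)" and lin2: "\<And>f. lin (P f)"
    and rec: "\<And>a b f g. 1 \<le> a \<Longrightarrow> 1 \<le> b \<Longrightarrow> h1 f \<Longrightarrow> h1 g \<Longrightarrow>
       P (pre (z a) f) (pre (z b) g) = pre (z a) (P f (pre (z b) g)) + pre (z b) (P (pre (z a) f) g) + E a b f g"
    and unitL: "\<And>g. h1 g \<Longrightarrow> P (wd []) g = g" and unitR: "\<And>f. h1 f \<Longrightarrow> P f (wd []) = f"
    and eqF: "\<And>n. F n = ser_one n + lpre lam k F n"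
    and eqG: "\<And>n. G n = ser_one n + lpre mu k G n" and k: "1 \<le> k"
  shows "ser_mult P F G n = ser_one n + lpre lam k (ser_mult P F G) n + lpre mu k (ser_mult P F G) n
     + (\<Sum>i\<le>n. \<Sum>a\<in>{1..i}. \<Sum>b\<in>{1..n - i}. hsmult (lam a * mu b) (E (a * k) (b * k) (F (i - a)) (G (n - i - b))))"
proof -
  have hF: "\<And>n. h1 (F n)" by (rule h1_from_eq[OF eqF k])
  have hG: "\<And>n. h1 (G n)" by (rule h1_from_eq[OF eqG k])
  define A where "A = lpre lam k F"
  define B where "B = lpre mu k G"
  have A: "A = (\<lambda>m. F m - ser_one m)" unfolding A_def using eqF by (auto simp: fun_eq_iff algebra_simps)
  have B: "B = (\<lambda>m. G m - ser_one m)" unfolding B_def using eqG by (auto simp: fun_eq_iff algebra_simps)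
  have hA: "h1 (A m)" for m unfolding A by (intro h1_minus hF h1_ser_one)
  have hB: "h1 (B m)" for m unfolding B by (intro h1_minus hG h1_ser_one)
  have F': "F = (\<lambda>m. ser_one m + A m)" using eqF by (auto simp: A_def)
  have G': "G = (\<lambda>m. ser_one m + B m)" using eqG by (auto simp: B_def)
  have "ser_mult P F G n = ser_mult P (\<lambda>m. ser_one m + A m) (\<lambda>m. ser_one m + B m) n"
    using F' G' by simp
  also have "\<dots> = ser_mult P ser_one ser_one n + ser_mult P ser_one B n + (ser_mult P A ser_one n + ser_mult P A B n)"
    by (simp add: ser_mult_add1[OF lin1] ser_mult_add2[OF lin2])
  also have "ser_mult P ser_one ser_one n = ser_one n"
    by (rule ser_mult_one1[where P=P and G=ser_one, OF lin1 unitL[OF h1_ser_one]])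
  also have "ser_mult P ser_one B n = B n"
    by (rule ser_mult_one1[where P=P and G=B, OF lin1 unitL[OF hB]])
  also have "ser_mult P A ser_one n = A n"
    by (rule ser_mult_one2[where P=P and F=A, OF lin2 unitR[OF hA]])
  also have "ser_mult P A B n = lpre lam k (ser_mult P F B) n + lpre mu k (ser_mult P A G) n
     + (\<Sum>i\<le>n. \<Sum>a\<in>{1..i}. \<Sum>b\<in>{1..n - i}. hsmult (lam a * mu b) (E (a * k) (b * k) (F (i - a)) (G (n - i - b))))"
    unfolding A_def B_def by (rule ser_key[OF lin1 lin2 rec hF hG k])
  also have "ser_mult P F B = (\<lambda>m. ser_mult P F G m - F m)"
    unfolding B by (auto simp: fun_eq_iff ser_mult_diff2[OF lin2] ser_mult_one2[where P=P and F=F, OF lin2 unitR[OF hF]])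
  also have "ser_mult P A G = (\<lambda>m. ser_mult P F G m - G m)"
    unfolding A by (auto simp: fun_eq_iff ser_mult_diff1[OF lin1] ser_mult_one1[where P=P and G=G, OF lin1 unitL[OF hG]])
  finally show ?thesis
    by (simp add: lpre_diff A_def[symmetric] B_def[symmetric] algebra_simps)
qed



definition lpw :: "(nat \<Rightarrow> word) \<Rightarrow> (nat \<Rightarrow> rat poly) \<Rightarrow> nat \<Rightarrow> hser \<Rightarrow> hser" where
  "lpw w nu k H = (\<lambda>n. \<Sum>c\<in>{1..n}. hsmult (nu c) (pre (w (c * k)) (H (n - c))))"

lemma lpre_lpw: "lpre lam k H n = lpw z lam k H n" by (simp add: lpre_def lpw_def)

definition conv :: "(nat \<Rightarrow> rat poly) \<Rightarrow> (nat \<Rightarrow> rat poly) \<Rightarrow> nat \<Rightarrow> rat poly" where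
  "conv lam mu c = (\<Sum>a\<in>{1..c - 1}. lam a * mu (c - a))"

lemma T3: fixes k n :: nat shows
  "(\<Sum>i\<le>n. \<Sum>a\<in>{1..i}. \<Sum>b\<in>{1..n - i}. hsmult (lam a * mu b) (pre (w (a * k + b * k)) (P' (F (i - a)) (G (n - i - b)))))
   = lpw w (conv lam mu) k (ser_mult P' F G) n"
proof -
  have "(\<Sum>i\<le>n. \<Sum>a\<in>{1..i}. \<Sum>b\<in>{1..n - i}. hsmult (lam a * mu b) (pre (w (a * k + b * k)) (P' (F (i - a)) (G (n - i - b)))))
    = (\<Sum>c\<in>{1..n}. \<Sum>a\<in>{1..c - 1}. \<Sum>r\<le>n - c. hsmult (lam a * mu (c - a)) (pre (w (a * k + (c - a) * k)) (P' (F r) (G (n - c - r)))))"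
    by (rule R3)
  also have "\<dots> = (\<Sum>c\<in>{1..n}. \<Sum>a\<in>{1..c - 1}. \<Sum>r\<le>n - c. hsmult (lam a * mu (c - a)) (pre (w (c * k)) (P' (F r) (G (n - c - r)))))"
  proof (intro sum.cong refl)
    fix c a r :: nat assume "a \<in> {1..c - 1}"
    then have "a + (c - a) = c" by auto
    then have "a * k + (c - a) * k = c * k" by (metis add_mult_distrib)
    then show "hsmult (lam a * mu (c - a)) (pre (w (a * k + (c - a) * k)) (P' (F r) (G (n - c - r)))) =
      hsmult (lam a * mu (c - a)) (pre (w (c * k)) (P' (F r) (G (n - c - r))))" by simp
  qed
  also have "\<dots> = lpw w (conv lam mu) k (ser_mult P' F G) n"
    unfolding lpw_def conv_def ser_mult_def
    apply (simp add: hsmult_sum_left hsmult_sum pre_sum)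
    apply (rule sum.cong[OF refl])
    by (rule sum.swap)
  finally show ?thesis .
qed

lemma rep_z: "1 \<le> k \<Longrightarrow> 1 \<le> c \<Longrightarrow> replicate k X @ z (c * k) = z (Suc c * k)"
proof -
  assume k: "1 \<le> k" and c: "1 \<le> c"
  have "1 \<le> c * k" using k c by simp
  then have "k + (c * k - 1) = Suc c * k - 1" by simp
  then show ?thesis by (simp add: z_def replicate_add[symmetric])
qed

lemma Fs_eq:
  assumes k: "1 \<le> k"
  shows "S_word s (zpow k n) = ser_one n + lpre (\<lambda>c. s ^ (c - 1)) k (\<lambda>m. S_word s (zpow k m)) n"
proof (cases n)
  case 0
  then show ?thesis by (simp add: S_word_0 ser_one_def lpre_def)
next
  case (Suc m)
  define F where "F = (\<lambda>m. S_word s (zpow k m))"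
  have "F (Suc m) = lpre (\<lambda>c. s ^ (c - 1)) k F (Suc m)" for m
  proof (induction m)
    case 0
    then show ?case using k S_word_1[OF k, of s] by (simp add: F_def lpre_def S_word_0)
  next
    case (Suc m)
    have "lpre (\<lambda>c. s ^ (c - 1)) k F (Suc (Suc m)) =
       hsmult 1 (pre (z (1 * k)) (F (Suc m))) + (\<Sum>c\<in>{Suc 1..Suc (Suc m)}. hsmult (s ^ (c - 1)) (pre (z (c * k)) (F (Suc (Suc m) - c))))"
      unfolding lpre_def by (subst sum.atLeast_Suc_atMost) auto
    also have "(\<Sum>c\<in>{Suc 1..Suc (Suc m)}. hsmult (s ^ (c - 1)) (pre (z (c * k)) (F (Suc (Suc m) - c))))
       = (\<Sum>c\<in>{1..Suc m}. hsmult (s ^ c) (pre (z (Suc c * k)) (F (Suc m - c))))"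
      by (subst sum.shift_bounds_cl_Suc_ivl) simp
    also have "\<dots> = (\<Sum>c\<in>{1..Suc m}. hsmult s (pre (replicate k X) (hsmult (s ^ (c - 1)) (pre (z (c * k)) (F (Suc m - c))))))"
    proof (rule sum.cong[OF refl])
      fix c assume "c \<in> {1..Suc m}"
      then have c: "1 \<le> c" by simp
      then have "s ^ c = s * s ^ (c - 1)" by (cases c) auto
      then show "hsmult (s ^ c) (pre (z (Suc c * k)) (F (Suc m - c))) =
        hsmult s (pre (replicate k X) (hsmult (s ^ (c - 1)) (pre (z (c * k)) (F (Suc m - c)))))"
        using rep_z[OF k c] by (simp add: pre_hsmult pre_pre hsmult_mult)
    qed
    also have "\<dots> = hsmult s (pre (replicate k X) (F (Suc m)))"
      using Suc.IH by (simp add: lpre_def pre_sum hsmult_sum pre_add hsmult_add)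
    finally show ?case
      using S_word_SS[OF k, of s m] by (simp add: F_def add.commute)
  qed
  then show ?thesis using Suc by (simp add: F_def ser_one_def)
qed

lemma scale_eq:
  assumes eq: "\<And>n. F n = ser_one n + lpre lam k F n"
  shows "hsmult (d ^ n) (F n) = ser_one n + lpre (\<lambda>c. d ^ c * lam c) k (\<lambda>m. hsmult (d ^ m) (F m)) n"
proof -
  have "hsmult (d ^ n) (F n) = hsmult (d ^ n) (ser_one n) + hsmult (d ^ n) (lpre lam k F n)"
    by (subst eq) (simp add: hsmult_add)
  also have "hsmult (d ^ n) (ser_one n) = ser_one n" by (simp add: ser_one_def)
  also have "hsmult (d ^ n) (lpre lam k F n) = lpre (\<lambda>c. d ^ c * lam c) k (\<lambda>m. hsmult (d ^ m) (F m)) n"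
    unfolding lpre_def hsmult_sum
  proof (rule sum.cong[OF refl])
    fix c assume "c \<in> {1..n}"
    then have "d ^ n = d ^ c * d ^ (n - c)" by (simp add: power_add[symmetric])
    then show "hsmult (d ^ n) (hsmult (lam c) (pre (z (c * k)) (F (n - c)))) =
       hsmult (d ^ c * lam c) (pre (z (c * k)) (hsmult (d ^ (n - c)) (F (n - c))))"
      by (simp add: pre_hsmult hsmult_mult ac_simps)
  qed
  finally show ?thesis .
qed

lemma wd_zpow_eq:
  assumes k: "1 \<le> k"
  shows "wd (zpow k n) = ser_one n + lpre (\<lambda>c. if c = 1 then 1 else 0) k (\<lambda>m. wd (zpow k m)) n"
proof (cases n)
  case 0
  then show ?thesis by (simp add: zpow_def ser_one_def lpre_def)
next
  case (Suc m)
  have "lpre (\<lambda>c. if c = 1 then 1 else 0) k (\<lambda>m. wd (zpow k m)) n = (\<Sum>c\<in>{1..n}. if c = 1 then wd (zpow k n) else 0)"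
    unfolding lpre_def
    by (rule sum.cong[OF refl]) (auto simp: Suc zpow_Suc)
  also have "\<dots> = wd (zpow k n)" using Suc by simp
  finally show ?thesis using Suc by (simp add: ser_one_def)
qed



lemma coefI_aux:
  fixes t :: "'a::comm_ring_1"
  shows "(\<Sum>a\<in>{1..m}. t ^ (a - 1) * ((-1) ^ (Suc m - a) * (1 - t) ^ (m - a))) = - (t ^ m) + (-1) ^ m * (1 - t) ^ m"
proof (induction m)
  case 0
  then show ?case by simp
next
  case (Suc m)
  have "(\<Sum>a\<in>{1..Suc m}. t ^ (a - 1) * ((-1) ^ (Suc (Suc m) - a) * (1 - t) ^ (Suc m - a)))
     = (\<Sum>a\<in>{1..m}. t ^ (a - 1) * ((-1) ^ (Suc (Suc m) - a) * (1 - t) ^ (Suc m - a))) - t ^ m"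
    by (simp add: sum.cl_ivl_Suc)
  also have "(\<Sum>a\<in>{1..m}. t ^ (a - 1) * ((-1) ^ (Suc (Suc m) - a) * (1 - t) ^ (Suc m - a)))
     = (\<Sum>a\<in>{1..m}. - (1 - t) * (t ^ (a - 1) * ((-1) ^ (Suc m - a) * (1 - t) ^ (m - a))))"
  proof (rule sum.cong[OF refl])
    fix a assume "a \<in> {1..m}"
    then have "Suc (Suc m) - a = Suc (Suc m - a)" "Suc m - a = Suc (m - a)" by auto
    then show "t ^ (a - 1) * ((-1) ^ (Suc (Suc m) - a) * (1 - t) ^ (Suc m - a)) =
      - (1 - t) * (t ^ (a - 1) * ((-1) ^ (Suc m - a) * (1 - t) ^ (m - a)))"
      by (simp add: algebra_simps)
  qed
  also have "\<dots> = - (1 - t) * (- (t ^ m) + (-1) ^ m * (1 - t) ^ m)"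
    by (subst sum_distrib_left[symmetric], subst Suc.IH, rule refl)
  finally show ?case by (simp add: algebra_simps)
qed

lemma coefI:
  fixes t :: "'a::comm_ring_1" and c :: nat
  assumes "1 \<le> c"
  shows "t ^ (c - 1) + (-1) ^ c * (1 - t) ^ (c - 1) + (\<Sum>a\<in>{1..c - 1}. t ^ (a - 1) * ((-1) ^ (c - a) * (1 - t) ^ (c - a - 1))) = 0"
proof -
  obtain m where c: "c = Suc m" using assms by (cases c) auto
  have "(\<Sum>a\<in>{1..c - 1}. t ^ (a - 1) * ((-1) ^ (c - a) * (1 - t) ^ (c - a - 1)))
      = (\<Sum>a\<in>{1..m}. t ^ (a - 1) * ((-1) ^ (Suc m - a) * (1 - t) ^ (m - a)))"
    unfolding c by (rule sum.cong) auto
  then show ?thesis using coefI_aux[of t m] c by simp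
qed

lemma coefII:
  fixes u :: "'a::comm_ring_1" and c :: nat
  assumes "1 \<le> c"
  shows "u ^ (c - 1) + (-1) ^ c * (if c = 1 then 1 else 0)
     + (\<Sum>a\<in>{1..c - 1}. u * u ^ (a - 1) * ((-1) ^ (c - a) * (if c - a = 1 then 1 else 0))) = 0"
proof -
  have "(\<Sum>a\<in>{1..c - 1}. u * u ^ (a - 1) * ((-1) ^ (c - a) * (if c - a = 1 then 1 else 0)))
     = (\<Sum>a\<in>{1..c - 1}. if a = c - 1 then - (u ^ (c - 1)) else 0)"
  proof (rule sum.cong[OF refl])
    fix a assume a: "a \<in> {1..c - 1}"
    show "u * u ^ (a - 1) * ((-1) ^ (c - a) * (if c - a = 1 then 1 else 0)) = (if a = c - 1 then - (u ^ (c - 1)) else 0)"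
    proof (cases "a = c - 1")
      case True
      have "u * u ^ (a - 1) = u ^ a" using a by (cases a) auto
      then have "c - a = 1" "u * u ^ (a - 1) = u ^ (c - 1)" using a True by auto
      then show ?thesis using True by simp
    next
      case False
      then have "c - a \<noteq> 1" using a by auto
      then show ?thesis using False by simp
    qed
  qed
  also have "\<dots> = (if 2 \<le> c then - (u ^ (c - 1)) else 0)"
    by (simp add: sum.delta') (use assms in auto)
  finally show ?thesis using assms
    by (cases "c = 1") auto
qed

lemma z_ne: "z m \<noteq> []" by (simp add: z_def)

lemma lookup_nil_eq:
  assumes eq: "\<And>n. F n = ser_one n + lpre lam k F n"
  shows "Poly_Mapping.lookup (F n) [] = (if n = 0 then 1 else 0)"
  by (subst eq) (simp add: lookup_add ser_one_def lookup_wd lpre_def lookup_sum lookup_pre_nil z_ne)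



lemma S_wd: "S s (wd w) = S_word s w" by (simp add: S_def)

lemma part1:
  fixes k :: nat
  assumes k: "k \<ge> 1"
  shows "ser_mult hprod (ser_map (S tvar) (geom 1 k)) (ser_map (S (1 - tvar)) (geom (-1) k)) = ser_one"
proof -
  define F where "F = (\<lambda>n. S_word tvar (zpow k n))"
  define G where "G = (\<lambda>n. hsmult ((-1) ^ n) (S_word (1 - tvar) (zpow k n)))"
  define lam where "lam = (\<lambda>c::nat. tvar ^ (c - 1))"
  define mu where "mu = (\<lambda>c::nat. (-1) ^ c * (1 - tvar) ^ (c - 1))"
  have F1: "ser_map (S tvar) (geom 1 k) = F"
    by (simp add: fun_eq_iff ser_map_def geom_def F_def zpow_def S_wd)
  have G1: "ser_map (S (1 - tvar)) (geom (-1) k) = G"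
    by (simp add: fun_eq_iff ser_map_def geom_def G_def zpow_def S_def linD(2)[OF lin_linext])
  have eqF: "F n = ser_one n + lpre lam k F n" for n
    unfolding F_def lam_def by (rule Fs_eq[OF k])
  have eqG: "G n = ser_one n + lpre mu k G n" for n
    unfolding G_def mu_def by (rule scale_eq[OF Fs_eq[OF k]])
  have main: "ser_mult hprod F G n = ser_one n + lpre lam k (ser_mult hprod F G) n + lpre mu k (ser_mult hprod F G) n
     + (\<Sum>i\<le>n. \<Sum>a\<in>{1..i}. \<Sum>b\<in>{1..n - i}. hsmult (lam a * mu b) (pre (z (a * k + b * k)) (hprod (F (i - a)) (G (n - i - b)))))" for n
    by (rule ser_main[where E="\<lambda>a b f g. pre (z (a + b)) (hprod f g)", OF lin_hprod1 lin_hprod2 hprod_rec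
          hprod_one_left hprod_one_right eqF eqG k])
  have "ser_mult hprod F G n = ser_one n" for n
  proof -
    have T: "(\<Sum>i\<le>n. \<Sum>a\<in>{1..i}. \<Sum>b\<in>{1..n - i}. hsmult (lam a * mu b) (pre (z (a * k + b * k)) (hprod (F (i - a)) (G (n - i - b)))))
       = lpre (conv lam mu) k (ser_mult hprod F G) n"
      unfolding lpre_lpw by (rule T3)
    have L: "lpre lam k (ser_mult hprod F G) n + lpre mu k (ser_mult hprod F G) n + lpre (conv lam mu) k (ser_mult hprod F G) n
      = lpre (\<lambda>c. lam c + mu c + conv lam mu c) k (ser_mult hprod F G) n"
      by (simp add: lpre_add_coef)
    have "ser_mult hprod F G n = ser_one n + lpre (\<lambda>c. lam c + mu c + conv lam mu c) k (ser_mult hprod F G) n"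
      using main[of n, unfolded T] L by (simp add: add.assoc)
    also have "lpre (\<lambda>c. lam c + mu c + conv lam mu c) k (ser_mult hprod F G) n = 0"
      by (rule lpre_zero_coef) (unfold lam_def mu_def conv_def, erule coefI)
    finally show ?thesis by simp
  qed
  then show ?thesis unfolding F1 G1 by (simp add: fun_eq_iff)
qed

lemma part2:
  fixes k :: nat
  assumes k: "k \<ge> 1"
  shows "ser_mult thprod (ser_map (S (1 - 2 * tvar)) (geom 1 k)) (geom (-1) k) = ser_one"
proof -
  define F where "F = (\<lambda>n. S_word (1 - 2 * tvar) (zpow k n))"
  define G where "G = (\<lambda>n. hsmult ((-1) ^ n) (wd (zpow k n)))"
  define lam where "lam = (\<lambda>c::nat. (1 - 2 * tvar) ^ (c - 1))"
  define mu where "mu = (\<lambda>c::nat. (-1) ^ c * (if c = 1 then 1 else 0) :: rat poly)"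
  define H where "H = ser_mult thprod F G"
  have F1: "ser_map (S (1 - 2 * tvar)) (geom 1 k) = F"
    by (simp add: fun_eq_iff ser_map_def geom_def F_def zpow_def S_wd)
  have G1: "geom (-1) k = G"
    by (simp add: fun_eq_iff geom_def G_def zpow_def)
  have eqF: "F n = ser_one n + lpre lam k F n" for n
    unfolding F_def lam_def by (rule Fs_eq[OF k])
  have eqG: "G n = ser_one n + lpre mu k G n" for n
    unfolding G_def mu_def by (rule scale_eq[OF wd_zpow_eq[OF k]])
  have rec: "thprod (pre (z a) f) (pre (z b) g) = pre (z a) (thprod f (pre (z b) g)) + pre (z b) (thprod (pre (z a) f) g)
     + (hsmult (1 - 2 * tvar) (pre (z (a + b)) (thprod f g)) + hsmult (tvar ^ 2 - tvar) (pre (replicate (a + b) X) (Q f g)))"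
    if "1 \<le> a" "1 \<le> b" "h1 f" "h1 g" for a b f g
    using thprod_rec[OF that] by (simp add: add.assoc)
  have main: "H n = ser_one n + lpre lam k H n + lpre mu k H n
     + (\<Sum>i\<le>n. \<Sum>a\<in>{1..i}. \<Sum>b\<in>{1..n - i}. hsmult (lam a * mu b)
        (hsmult (1 - 2 * tvar) (pre (z (a * k + b * k)) (thprod (F (i - a)) (G (n - i - b))))
         + hsmult (tvar ^ 2 - tvar) (pre (replicate (a * k + b * k) X) (Q (F (i - a)) (G (n - i - b))))))" for n
    unfolding H_def
    by (rule ser_main[where E="\<lambda>a b f g. hsmult (1 - 2 * tvar) (pre (z (a + b)) (thprod f g))
       + hsmult (tvar ^ 2 - tvar) (pre (replicate (a + b) X) (Q f g))", OF lin_thprod1 lin_thprod2 rec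
          thprod_one_left thprod_one_right eqF eqG k])
  have main2: "H n = ser_one n + lpw (\<lambda>m. replicate m X) (conv (\<lambda>a. (tvar ^ 2 - tvar) * lam a) mu) k (ser_mult Q F G) n" for n
  proof -
    have "(\<Sum>i\<le>n. \<Sum>a\<in>{1..i}. \<Sum>b\<in>{1..n - i}. hsmult (lam a * mu b)
        (hsmult (1 - 2 * tvar) (pre (z (a * k + b * k)) (thprod (F (i - a)) (G (n - i - b))))
         + hsmult (tvar ^ 2 - tvar) (pre (replicate (a * k + b * k) X) (Q (F (i - a)) (G (n - i - b))))))
      = (\<Sum>i\<le>n. \<Sum>a\<in>{1..i}. \<Sum>b\<in>{1..n - i}. hsmult ((1 - 2 * tvar) * lam a * mu b)
        (pre (z (a * k + b * k)) (thprod (F (i - a)) (G (n - i - b)))))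
       + (\<Sum>i\<le>n. \<Sum>a\<in>{1..i}. \<Sum>b\<in>{1..n - i}. hsmult ((tvar ^ 2 - tvar) * lam a * mu b)
        (pre (replicate (a * k + b * k) X) (Q (F (i - a)) (G (n - i - b)))))"
      by (simp add: hsmult_add hsmult_mult sum.distrib ac_simps)
    also have "\<dots> = lpre (conv (\<lambda>a. (1 - 2 * tvar) * lam a) mu) k H n
        + lpw (\<lambda>m. replicate m X) (conv (\<lambda>a. (tvar ^ 2 - tvar) * lam a) mu) k (ser_mult Q F G) n"
      using T3[where n=n and lam="\<lambda>a. (1 - 2 * tvar) * lam a" and mu=mu and w=z and k=k and P'=thprod and F=F and G=G]
        T3[where n=n and lam="\<lambda>a. (tvar ^ 2 - tvar) * lam a" and mu=mu and w="\<lambda>m. replicate m X" and k=k and P'=Q and F=F and G=G]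
      by (simp only: lpre_lpw H_def)
    finally have "H n = ser_one n + lpre (\<lambda>c. lam c + mu c + conv (\<lambda>a. (1 - 2 * tvar) * lam a) mu c) k H n
        + lpw (\<lambda>m. replicate m X) (conv (\<lambda>a. (tvar ^ 2 - tvar) * lam a) mu) k (ser_mult Q F G) n"
      using main[of n] by (simp add: lpre_add_coef[symmetric] add.assoc)
    also have "lpre (\<lambda>c. lam c + mu c + conv (\<lambda>a. (1 - 2 * tvar) * lam a) mu c) k H n = 0"
      by (rule lpre_zero_coef) (unfold lam_def mu_def conv_def, erule coefII)
    finally show ?thesis by simp
  qed
  have lF: "Poly_Mapping.lookup (F n) [] = (if n = 0 then 1 else 0)" for n by (rule lookup_nil_eq[OF eqF])
  have lG: "Poly_Mapping.lookup (G n) [] = (if n = 0 then 1 else 0)" for n by (rule lookup_nil_eq[OF eqG])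
  have Qrel: "ser_mult Q F G m = H m - (if m = 0 then wd [] else 0)" for m
  proof -
    have "ser_mult Q F G m = H m - (\<Sum>i\<le>m. hsmult (Poly_Mapping.lookup (F i) [] * Poly_Mapping.lookup (G (m - i)) []) (wd []))"
      by (simp add: ser_mult_def H_def Q_def sum_subtractf)
    also have "(\<Sum>i\<le>m. hsmult (Poly_Mapping.lookup (F i) [] * Poly_Mapping.lookup (G (m - i)) []) (wd []))
       = (\<Sum>i\<le>m. if i = 0 then (if m = 0 then wd [] else 0) else 0)"
      by (rule sum.cong[OF refl]) (auto simp: lF lG)
    finally show ?thesis by simp
  qed
  have "H n = ser_one n" for n
  proof (induction n rule: less_induct)
    case (less n)
    have "ser_mult Q F G m = 0" if "m < n" for m
      using Qrel[of m] less[OF that] by (simp add: ser_one_def)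
    then have "lpw (\<lambda>m. replicate m X) (conv (\<lambda>a. (tvar ^ 2 - tvar) * lam a) mu) k (ser_mult Q F G) n = 0"
      unfolding lpw_def by (intro sum.neutral) auto
    then show ?case using main2[of n] by simp
  qed
  then show ?thesis unfolding F1 G1 by (simp add: fun_eq_iff H_def)
qed

theorem corollary4p7:
  fixes k :: nat
  assumes "k \<ge> 1"
  shows "ser_mult hprod (ser_map (S tvar) (geom 1 k)) (ser_map (S (1 - tvar)) (geom (-1) k))
           = ser_one
       \<and> ser_mult thprod (ser_map (S (1 - 2 * tvar)) (geom 1 k)) (geom (-1) k) = ser_one"
  using part1[OF assms] part2[OF assms] by simp


end
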